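(* Let $\lambda$ be a weak Perron number and let $f_\lambda:\ast_{Nn}\to\ast_{Nn}$ be the star map constructed below. Then its split map $S(f_\lambda):S(\ast_{Nn})\to S(\ast_{Nn})$ is ergodic; i.e. for each pair of edges $y_I,z_J$ of $S(\ast_{Nn})$ there exists $L$ such that the edge path $S(f_\lambda)^L(y_I)$ traverses $z_J$.
   Context: A weak Perron number is a real algebraic integer $\lambda$ with $\lambda\ge|\lambda_i|$ for all Galois conjugates; a Perron number satisfies the strict inequality for all conjugates other than itself. Let $N$ be a positive integer such that $\mu=\lambda^N$ is Perron, and let $f_\mu:\ast_n\to\ast_n$ (with its edge lengths) be the star map constructed for the Perron number $\mu$ as follows: with $\mathcal{O}_\mu$ the ring of integers of $\mathbb{Q}(\mu)$, $V_\mu=\mathbb{Q}(\mu)\otimes\mathbb{R}$, unit eigenvectors $v_1$ (eigenvalue $\mu$), $v_2,\dots$ of multiplication by $\mu$, cone $K_\mu=\{\sum a_iv_i:a_1>0,a_1>|a_i|\}$, a rational closed convex polyhedral cone $KR_\mu$ generated by elements of $\mathcal{O}_\mu$ with $\mu K_\mu\subset KR_\mu\subset K_\mu$, semigroup $(\mathcal{O}_\mu\cap KR_\mu)\setminus\{0\}$ generated by $s_1,\dots,s_m$; positive integers $N'>n_0$ with $\mu^{N'}\equiv\mu^{n_0}\pmod{2\mathcal{O}_\mu}$; an integer $M=p(N'-n_0)+N'$ and nonnegative integers $e^{(k)}_i$ with $\mu^Ms_k=\sum_i(2e^{(k)}_i+2)s_i+2\mu s_k+\mu^{n_0}s_k$;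 $n=mM$, edges $(s_k,i)$ of length $\mu^{i-1}s_k$; $f_\mu$ fixes the center, maps $(s_k,i)\mapsto(s_k,i+1)$ for $i<M$, and maps $(s_k,M)$ to the path traversing $(s_k,1)$ back and forth $e^{(k)}_k+1$ times, then each $(s_j,1)$, $j\ne k$ (in some fixed order), back and forth $e^{(k)}_j+1$ times, then $(s_k,2)$ out and back once, then $(s_k,n_0+1)$ once. Now $\ast_{Nn}$ is formed by gluing $N$ copies $C^0,\dots,C^{N-1}$ of $\ast_n$ at their centers; edge $(i,j)$ is the copy in $C^i$ of edge $j$ of $\ast_n$, with length $\lambda^i$ times the length of $j$. The map $f_\lambda$ sends $(i,j)\mapsto(i+1,j)$ for $i<N-1$, and sends $(N-1,j)$ to the copy in $C^0$ of the edge path $f_\mu(j)$. Split map: prototype $P_7$ with edges $a,\dots,g$ from $v_0$ to $v_1$ (uppercase = reversed), $\phi_1=\mathrm{id}$, and for $m'\ge0$, $\phi_{3+2m'}$: $a\mapsto aG(aB)^{m'}a$, $b\mapsto bD(bC)^{m'}b$, $c\mapsto cF(cA)^{m'}c$, $d\mapsto aB(aB)^{m'}a$, $e\mapsto cB(aB)^{m'}a$, $f\mapsto aC(aB)^{m'}a$, $g\mapsto bE(bA)^{m'}b$. The split graph replaces each edge $x_I$ (oriented center to tip) by seven parallel edges $a_I,\dots,g_I$; the split map sends $y_I$ to the path obtained from the word $\phi_\ell(y)$, $\ell$ the number of edges of $f_\lambda(x_I)$, by giving its $t$-th letter the subscript of the $t$-th edge of $f_\lambda(x_I)$. *)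

theory Defs
  imports Complex_Main "HOL-Computational_Algebra.Computational_Algebra"
begin

definition alg_int :: "'a::field_char_0 \<Rightarrow> bool" where
  "alg_int x \<longleftrightarrow> (\<exists>p::int poly. lead_coeff p = 1 \<and> poly (map_poly of_int p) x = 0)"

definition galois_conj :: "complex \<Rightarrow> real \<Rightarrow> bool" where
  "galois_conj z lam \<longleftrightarrow> (\<exists>p::rat poly. irreducible p
      \<and> poly (map_poly of_rat p) (complex_of_real lam) = 0
      \<and> poly (map_poly of_rat p) z = 0)"

definition weak_perron :: "real \<Rightarrow> bool" where
  "weak_perron lam \<longleftrightarrow> alg_int lam \<and> (\<forall>z. galois_conj z lam \<longrightarrow> cmod z \<le> lam)"

definition perron :: "real \<Rightarrow> bool" where
  "perron lam \<longleftrightarrow> alg_int lam \<and>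
     (\<forall>z. galois_conj z lam \<and> z \<noteq> complex_of_real lam \<longrightarrow> cmod z < lam)"

definition in_Qfield :: "real \<Rightarrow> real \<Rightarrow> bool" where
  "in_Qfield x mu \<longleftrightarrow> (\<exists>q::rat poly. x = poly (map_poly of_rat q) mu)"

text \<open>Edge paths are lists of (edge, direction); direction True means the edge is
  traversed in its orientation (centre to tip), False means reversed.\<close>

definition back_forth :: "nat \<Rightarrow> 'e \<Rightarrow> ('e \<times> bool) list" where
  "back_forth r x = concat (replicate r [(x, True), (x, False)])"

text \<open>The star map f_mu on the star with edges (k,j), k < m (generator s_k), 1 <= j <= M.
  ord k lists the indices j <> k in the fixed order used in the construction.\<close>
definition fmu :: "nat \<Rightarrow> nat \<Rightarrow> (nat \<Rightarrow> nat \<Rightarrow> nat) \<Rightarrow> (nat \<Rightarrow> nat list)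
    \<Rightarrow> nat \<times> nat \<Rightarrow> ((nat \<times> nat) \<times> bool) list" where
  "fmu M n0 e ord x = (case x of (k, j) \<Rightarrow>
     (if j < M then [((k, j + 1), True)]
      else back_forth (e k k + 1) (k, 1)
           @ concat (map (\<lambda>j'. back_forth (e k j' + 1) (j', 1)) (ord k))
           @ [((k, 2), True), ((k, 2), False), ((k, n0 + 1), True)]))"

text \<open>Edges of the star with N n edges: (i,k,j) = copy in C^i of edge (k,j).\<close>
definition star_edges :: "nat \<Rightarrow> nat \<Rightarrow> nat \<Rightarrow> (nat \<times> nat \<times> nat) set" where
  "star_edges N m M = {(i, k, j). i < N \<and> k < m \<and> 1 \<le> j \<and> j \<le> M}"

definition flam :: "nat \<Rightarrow> nat \<Rightarrow> nat \<Rightarrow> (nat \<Rightarrow> nat \<Rightarrow> nat) \<Rightarrow> (nat \<Rightarrow> nat list)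
    \<Rightarrow> nat \<times> nat \<times> nat \<Rightarrow> ((nat \<times> nat \<times> nat) \<times> bool) list" where
  "flam N M n0 e ord x = (case x of (i, k, j) \<Rightarrow>
     (if i + 1 < N then [((i + 1, k, j), True)]
      else map (\<lambda>((k', j'), d). ((0, k', j'), d)) (fmu M n0 e ord (k, j))))"

datatype letter = La | Lb | Lc | Ld | Le | Lf | Lg

text \<open>The words phi_l of the prototype P_7; (x, True) is a lowercase letter,
  (x, False) uppercase (reversed). Only odd l are relevant.\<close>
definition phi :: "nat \<Rightarrow> letter \<Rightarrow> (letter \<times> bool) list" where
  "phi l y = (if l = 1 then [(y, True)] else
     (let m' = (l - 3) div 2;
          u = (\<lambda>x. (x, True)); U = (\<lambda>x. (x, False));
          w = (\<lambda>s t q r z. [u s, U t] @ concat (replicate m' [u q, U r]) @ [u z])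
      in (case y of
            La \<Rightarrow> w La Lg La Lb La
          | Lb \<Rightarrow> w Lb Ld Lb Lc Lb
          | Lc \<Rightarrow> w Lc Lf Lc La Lc
          | Ld \<Rightarrow> w La Lb La Lb La
          | Le \<Rightarrow> w Lc Lb La Lb La
          | Lf \<Rightarrow> w La Lc La Lb La
          | Lg \<Rightarrow> w Lb Le Lb La Lb)))"

definition rev_path :: "('e \<times> bool) list \<Rightarrow> ('e \<times> bool) list" where
  "rev_path p = rev (map (\<lambda>(x, d). (x, \<not> d)) p)"

definition path_map :: "('e \<Rightarrow> ('e \<times> bool) list) \<Rightarrow> ('e \<times> bool) list \<Rightarrow> ('e \<times> bool) list" where
  "path_map F p = concat (map (\<lambda>(x, d). if d then F x else rev_path (F x)) p)"

text \<open>Split map: the split edge (y, I) is the copy y_I; it is sent to phi_l(y) with the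
  t-th letter subscripted by the t-th edge of f_lambda(x_I), l = length of f_lambda(x_I).\<close>
definition split_map :: "nat \<Rightarrow> nat \<Rightarrow> nat \<Rightarrow> (nat \<Rightarrow> nat \<Rightarrow> nat) \<Rightarrow> (nat \<Rightarrow> nat list)
    \<Rightarrow> letter \<times> (nat \<times> nat \<times> nat) \<Rightarrow> ((letter \<times> (nat \<times> nat \<times> nat)) \<times> bool) list" where
  "split_map N M n0 e ord x = (case x of (y, I) \<Rightarrow>
     (let w = flam N M n0 e ord I
      in map (\<lambda>((l, d), (It, _)). ((l, It), d)) (zip (phi (length w) y) w)))"

definition split_edges :: "nat \<Rightarrow> nat \<Rightarrow> nat \<Rightarrow> (letter \<times> (nat \<times> nat \<times> nat)) set" where
  "split_edges N m M = UNIV \<times> star_edges N m M"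

definition split_ergodic :: "nat \<Rightarrow> nat \<Rightarrow> nat \<Rightarrow> nat \<Rightarrow> (nat \<Rightarrow> nat \<Rightarrow> nat) \<Rightarrow> (nat \<Rightarrow> nat list) \<Rightarrow> bool" where
  "split_ergodic N m M n0 e ord \<longleftrightarrow>
     (\<forall>y \<in> split_edges N m M. \<forall>z \<in> split_edges N m M. \<exists>L::nat.
        z \<in> fst ` set ((path_map (split_map N M n0 e ord) ^^ L) [(y, True)]))"

end

theory Submission
  imports Defs
begin


definition E :: "('e \<times> bool) list \<Rightarrow> 'e set" where "E p = fst ` set p"

lemma E_rev[simp]: "E (rev_path q) = E q"
  unfolding E_def rev_path_def by (force simp: image_iff)

lemma pm_Cons: "path_map F ((x,d)#p) = (if d then F x else rev_path (F x)) @ path_map F p"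
  unfolding path_map_def by simp

lemma E_Cons: "E ((x,d)#p) = insert x (E p)" unfolding E_def by simp
lemma E_app: "E (p @ q) = E p \<union> E q" unfolding E_def by auto

lemma E_pm: "E (path_map F p) = (\<Union>x\<in>E p. E (F x))"
proof (induction p)
  case Nil then show ?case by (simp add: path_map_def E_def)
next
  case (Cons a p)
  obtain x d where a: "a = (x,d)" by fastforce
  have "E (if d then F x else rev_path (F x)) = E (F x)" by simp
  then show ?case unfolding a pm_Cons E_app E_Cons Cons by simp
qed

lemma E_iter: "E ((path_map F ^^ L) p) = {z. \<exists>x\<in>E p. (x,z) \<in> {(u,v). v \<in> E (F u)} ^^ L}"
proof (induction L)
  case 0 then show ?case by auto
next
  case (Suc L)
  show ?case by (simp add: E_pm Suc relpow.simps) blast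
qed

lemma ergo_from_rtrancl:
  assumes "\<forall>y \<in> split_edges N m M. \<forall>z \<in> split_edges N m M.
     (y,z) \<in> {(u,v). v \<in> E (split_map N M n0 e ord u)}\<^sup>*"
  shows "split_ergodic N m M n0 e ord"
  unfolding split_ergodic_def
proof (intro ballI)
  fix y z assume "y \<in> split_edges N m M" "z \<in> split_edges N m M"
  with assms obtain L where "(y,z) \<in> {(u,v). v \<in> E (split_map N M n0 e ord u)} ^^ L"
    by (meson rtrancl_power)
  then have "z \<in> E ((path_map (split_map N M n0 e ord) ^^ L) [(y, True)])"
    using E_iter[where F="split_map N M n0 e ord" and L=L and p="[(y,True)]"] by (simp add: E_def)
  then show "\<exists>L. z \<in> fst ` set ((path_map (split_map N M n0 e ord) ^^ L) [(y, True)])"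
    unfolding E_def by blast
qed

fun sl where "sl La = La" | "sl Lb = Lb" | "sl Lc = Lc" | "sl Ld = La" | "sl Le = Lc" | "sl Lf = La" | "sl Lg = Lb"
fun tl' where "tl' La = Lg" | "tl' Lb = Ld" | "tl' Lc = Lf" | "tl' Ld = Lb" | "tl' Le = Lb" | "tl' Lf = Lc" | "tl' Lg = Le"

lemma phi_cons: "l \<noteq> 1 \<Longrightarrow> \<exists>rest. phi l y = (sl y, True) # (tl' y, False) # rest"
  by (cases y) (simp_all add: phi_def Let_def)

lemma phi_len: "l \<noteq> 1 \<Longrightarrow> length (phi l y) = 3 + 2 * ((l - 3) div 2)"
  by (cases y) (simp_all add: phi_def Let_def length_concat sum_list_replicate)

definition SR where "SR = {(x, sl x) | x. True} \<union> {(x, tl' x) | x. True}"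

lemma SR_all: "(x, x') \<in> SR\<^sup>*"
proof -
  have st: "(x, sl x) \<in> SR\<^sup>*" "(x, tl' x) \<in> SR\<^sup>*" for x unfolding SR_def by auto
  have toA: "(x, La) \<in> SR\<^sup>*" for x
  proof (cases x)
    case La then show ?thesis by simp
  next
    case Lb then show ?thesis using rtrancl_trans[OF st(2)[of Lb, simplified] st(1)[of Ld, simplified]] by simp
  next
    case Lc then show ?thesis using rtrancl_trans[OF st(2)[of Lc, simplified] st(1)[of Lf, simplified]] by simp
  next
    case Ld then show ?thesis using st(1)[of Ld, simplified] by simp
  next
    case Le then show ?thesis using rtrancl_trans[OF rtrancl_trans[OF st(1)[of Le, simplified] st(2)[of Lc, simplified]] st(1)[of Lf, simplified]] by simp
  next
    case Lf then show ?thesis using st(1)[of Lf, simplified] by simp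
  next
    case Lg then show ?thesis using rtrancl_trans[OF rtrancl_trans[OF st(1)[of Lg, simplified] st(2)[of Lb, simplified]] st(1)[of Ld, simplified]] by simp
  qed
  have ag: "(La, Lg) \<in> SR\<^sup>*" using st(2)[of La, simplified] by simp
  have ab: "(La, Lb) \<in> SR\<^sup>*" using ag st(1)[of Lg, simplified] by (rule rtrancl_trans)
  have ae: "(La, Le) \<in> SR\<^sup>*" using ag st(2)[of Lg, simplified] by (rule rtrancl_trans)
  have ac: "(La, Lc) \<in> SR\<^sup>*" using ae st(1)[of Le, simplified] by (rule rtrancl_trans)
  have ad: "(La, Ld) \<in> SR\<^sup>*" using ab st(2)[of Lb, simplified] by (rule rtrancl_trans)
  have af: "(La, Lf) \<in> SR\<^sup>*" using ac st(2)[of Lc, simplified] by (rule rtrancl_trans)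
  have fromA: "(La, x) \<in> SR\<^sup>*" for x
    by (cases x) (use ag ab ae ac ad af in auto)
  show ?thesis using toA fromA by (meson rtrancl_trans)
qed


lemma phi_1[simp]: "phi (Suc 0) y = [(y,True)]"
  unfolding phi_def One_nat_def by (simp only: simp_thms if_True)

lemma flam_1: "i+1<N \<Longrightarrow> flam N M n0 e ord (i,k,j) = [((i+1,k,j),True)]"
  unfolding flam_def by simp

lemma flam_2: "N\<ge>1 \<Longrightarrow> j<M \<Longrightarrow> flam N M n0 e ord (N-1,k,j) = [((0,k,j+1),True)]"
  unfolding flam_def fmu_def by simp

lemma sm_eq: "split_map N M n0 e ord (y,I) = map (\<lambda>((l, d), (It, _)). ((l, It), d)) (zip (phi (length (flam N M n0 e ord I)) y) (flam N M n0 e ord I))"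
  unfolding split_map_def Let_def by simp

lemma st1: "i+1<N \<Longrightarrow> (x,(i+1,k,j)) \<in> E (split_map N M n0 e ord (x,(i,k,j)))"
  unfolding sm_eq by (simp add: flam_1 E_def)

lemma st2: assumes "N\<ge>1" "j<M" shows "(x,(0,k,j+1)) \<in> E (split_map N M n0 e ord (x,(N-1,k,j)))"
  unfolding sm_eq flam_2[OF assms] by (simp add: E_def)

lemma bf_Suc: "back_forth (Suc r) x = (x,True) # (x,False) # back_forth r x"
  by (simp add: back_forth_def)

lemma flam_T: "N\<ge>1 \<Longrightarrow> flam N M n0 e ord (N-1,k,M) = ((0,k,1),True)#((0,k,1),False)#
   map (\<lambda>((k', j'), d). ((0, k', j'), d)) (back_forth (e k k) (k,1) @ concat (map (\<lambda>j'. back_forth (e k j' + 1) (j', 1)) (ord k)) @ [((k, 2), True), ((k, 2), False), ((k, n0 + 1), True)])"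
  by (simp add: flam_def fmu_def bf_Suc)

lemma st3: "N\<ge>1 \<Longrightarrow> (sl y,(0,k,1)) \<in> E (split_map N M n0 e ord (y,(N-1,k,M))) \<and> (tl' y,(0,k,1)) \<in> E (split_map N M n0 e ord (y,(N-1,k,M)))"
proof -
  assume N: "N\<ge>1"
  let ?w = "flam N M n0 e ord (N-1,k,M)"
  obtain rest' where w: "?w = ((0,k,1),True)#((0,k,1),False)#rest'" using flam_T[OF N] by blast
  have "length ?w \<noteq> 1" using w by simp
  then obtain rest where ph: "phi (length ?w) y = (sl y, True) # (tl' y, False) # rest"
    using phi_cons by blast
  show ?thesis unfolding sm_eq ph E_def
    unfolding w by simp
qed

lemma st4: assumes N: "N\<ge>1" and j: "j' \<in> set (ord k)"
  shows "\<exists>x. (x,(0,j',1)) \<in> E (split_map N M n0 e ord (y,(N-1,k,M)))"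
proof -
  let ?g = "(\<lambda>((k', j'), d). ((0::nat, k'::nat, j'::nat), d::bool))"
  define P where "P = ((k,1::nat),True)#((k,1),False)#back_forth (e k k) (k,1) @ concat (map (\<lambda>j'. back_forth (e k j' + 1) (j', 1)) (ord k))"
  let ?w = "flam N M n0 e ord (N-1,k,M)"
  have w: "?w = map ?g P @ map ?g [((k, 2), True), ((k, 2), False), ((k, n0 + 1), True)]"
    using flam_T[OF N] by (simp add: P_def)
  have lw: "length ?w = length P + 3" using w by simp
  have lp: "length (phi (length ?w) y) \<ge> length P" using phi_len[of "length ?w" y] lw by simp
  have "((j',1),True) \<in> set P" using j unfolding P_def by (auto simp: back_forth_def)
  then have "(0,j',1) \<in> fst ` set (map ?g P)" by force
  moreover have "map ?g P = take (length P) ?w" using w by simp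
  moreover have "set (take (length P) ?w) \<subseteq> set (take (length (phi (length ?w) y)) ?w)"
    using lp by (simp add: set_take_subset_set_take)
  ultimately obtain d where "((0,j',1),d) \<in> set (take (length (phi (length ?w) y)) ?w)" by force
  then obtain t where t: "t < length (phi (length ?w) y)" "t < length ?w" "?w ! t = ((0,j',1),d)"
    by (auto simp: in_set_conv_nth)
  obtain x d' where ph: "phi (length ?w) y ! t = (x,d')" by fastforce
  have "(phi (length ?w) y ! t, ?w ! t) \<in> set (zip (phi (length ?w) y) ?w)"
    using t by (auto simp: in_set_conv_nth intro!: exI[of _ t])
  then have "((x,d'),((0,j',1),d)) \<in> set (zip (phi (length ?w) y) ?w)" using t ph by simp
  then have "(x,(0,j',1)) \<in> E (split_map N M n0 e ord (y,(N-1,k,M)))"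
    unfolding split_map_def E_def Let_def by force
  then show ?thesis by blast
qed


definition RR where "RR N M n0 e ord = {(u,v). v \<in> E (split_map N M n0 e ord u)}"

lemma C1: "i<N \<Longrightarrow> ((x,(0,k,j)),(x,(i,k,j))) \<in> (RR N M n0 e ord)\<^sup>*"
proof (induction i)
  case 0 then show ?case by simp
next
  case (Suc i)
  then have "((x,(i,k,j)),(x,(Suc i,k,j))) \<in> RR N M n0 e ord"
    using st1[where i=i and N=N and x=x and k=k and j=j and M=M and e=e and ord=ord] by (simp add: RR_def)
  with Suc show ?case by (meson Suc_lessD rtrancl.rtrancl_into_rtrancl)
qed

lemma C2: "i<N \<Longrightarrow> ((x,(i,k,j)),(x,(N-1,k,j))) \<in> (RR N M n0 e ord)\<^sup>*"
proof (induction "N-1-i" arbitrary: i)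
  case 0 then have "i = N-1" by simp
  then show ?case by simp
next
  case (Suc d)
  then have "i+1<N" by simp
  then have "((x,(i,k,j)),(x,(i+1,k,j))) \<in> RR N M n0 e ord"
    using st1[where i=i and N=N and x=x and k=k and j=j and M=M and e=e and ord=ord] by (simp add: RR_def)
  moreover have "((x,(i+1,k,j)),(x,(N-1,k,j))) \<in> (RR N M n0 e ord)\<^sup>*"
    using Suc \<open>i+1<N\<close> by simp
  ultimately show ?case by (meson converse_rtrancl_into_rtrancl)
qed

lemma C3: assumes N: "N\<ge>1" shows "1\<le>j \<Longrightarrow> j\<le>M \<Longrightarrow> ((x,(0,k,1)),(x,(0,k,j))) \<in> (RR N M n0 e ord)\<^sup>*"
proof (induction j)
  case 0 then show ?case by simp
next
  case (Suc j)
  show ?case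
  proof (cases "j = 0")
    case True
    then show ?thesis by simp
  next
    case False
    then have a: "((x,(0,k,1)),(x,(0,k,j))) \<in> (RR N M n0 e ord)\<^sup>*" using Suc by simp
    have "j < M" using Suc by simp
    have "((x,(N-1,k,j)),(x,(0,k,j+1))) \<in> RR N M n0 e ord"
      using st2[where x=x and k=k and e=e and ord=ord, OF N \<open>j<M\<close>] by (simp add: RR_def)
    moreover have "((x,(0,k,j)),(x,(N-1,k,j))) \<in> (RR N M n0 e ord)\<^sup>*"
      using C2[where i=0 and N=N and x=x and k=k and j="j" and M=M and e=e and ord=ord] N by simp
    ultimately show ?thesis using a by (simp add: rtrancl_trans)
  qed
qed

lemma C4: assumes N: "N\<ge>1" shows "1\<le>j \<Longrightarrow> j\<le>M \<Longrightarrow> ((x,(N-1,k,j)),(x,(N-1,k,M))) \<in> (RR N M n0 e ord)\<^sup>*"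
proof (induction "M-j" arbitrary: j)
  case 0 then show ?case by simp
next
  case (Suc d)
  then have "j < M" by simp
  have "((x,(N-1,k,j)),(x,(0,k,j+1))) \<in> RR N M n0 e ord"
    using st2[where x=x and k=k and e=e and ord=ord, OF N \<open>j<M\<close>] by (simp add: RR_def)
  moreover have "((x,(0,k,j+1)),(x,(N-1,k,j+1))) \<in> (RR N M n0 e ord)\<^sup>*"
    using C2[where i=0 and N=N and x=x and k=k and j="j+1" and M=M and e=e and ord=ord] N by simp
  moreover have "((x,(N-1,k,j+1)),(x,(N-1,k,M))) \<in> (RR N M n0 e ord)\<^sup>*"
    using Suc \<open>j<M\<close> by simp
  ultimately show ?case by (meson converse_rtrancl_into_rtrancl rtrancl_trans)
qed

lemma to_T: assumes N: "N\<ge>1" and "(x,(i,k,j)) \<in> split_edges N m M"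
  shows "((x,(i,k,j)),(x,(N-1,k,M))) \<in> (RR N M n0 e ord)\<^sup>*"
proof -
  have j: "1 \<le> j" "j \<le> M" "i < N" using assms(2) unfolding split_edges_def star_edges_def by auto
  show ?thesis
    using C2[where i=i and N=N and x=x and k=k and j=j and M=M and e=e and ord=ord, OF j(3)]
      C4[where N=N and j=j and x=x and k=k and M=M and e=e and ord=ord, OF N j(1,2)]
    by (rule rtrancl_trans)
qed

lemma from_start: assumes N: "N\<ge>1" and "(x,(i,k,j)) \<in> split_edges N m M"
  shows "((x,(0,k,1)),(x,(i,k,j))) \<in> (RR N M n0 e ord)\<^sup>*"
proof -
  have j: "1 \<le> j" "j \<le> M" "i < N" using assms(2) unfolding split_edges_def star_edges_def by auto
  show ?thesis
    using C3[where N=N and j=j and x=x and k=k and M=M and e=e and ord=ord, OF N j(1,2)]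
      C1[where i=i and N=N and x=x and k=k and j=j and M=M and e=e and ord=ord, OF j(3)]
    by (rule rtrancl_trans)
qed


lemma start_T: assumes N: "N\<ge>1" and M: "M\<ge>1"
  shows "((x,(0,k,1)),(x,(N-1,k,M))) \<in> (RR N M n0 e ord)\<^sup>*"
proof -
  have a: "((x,(0,k,1)),(x,(0,k,M))) \<in> (RR N M n0 e ord)\<^sup>*"
    using C3[where N=N and j=M and x=x and k=k and M=M and e=e and ord=ord, OF N M order.refl] .
  have "0 < N" using N by simp
  then have b: "((x,(0,k,M)),(x,(N-1,k,M))) \<in> (RR N M n0 e ord)\<^sup>*"
    by (rule C2)
  show ?thesis by (rule rtrancl_trans[OF a b])
qed

lemma letterT: assumes N: "N\<ge>1" and M: "M\<ge>1"
  shows "((x,(N-1,k,M)),(x',(N-1,k,M))) \<in> (RR N M n0 e ord)\<^sup>*"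
proof -
  have "(x,x') \<in> SR\<^sup>*" by (rule SR_all)
  then show ?thesis
  proof (induction rule: rtrancl_induct)
    case base then show ?case by simp
  next
    case (step x' x'')
    have "((x',(N-1,k,M)),(x'',(0,k,1))) \<in> RR N M n0 e ord"
      using step(2) st3[OF N, of x' k M n0 e ord] unfolding SR_def RR_def by auto
    then have "((x',(N-1,k,M)),(x'',(N-1,k,M))) \<in> (RR N M n0 e ord)\<^sup>*"
      using start_T[OF N M, of x'' k n0 e ord] by (meson converse_rtrancl_into_rtrancl)
    with step(3) show ?case by (rule rtrancl_trans)
  qed
qed

lemma crossT: assumes N: "N\<ge>1" and M: "M\<ge>1" and j: "k' \<in> set (ord k)"
  shows "((x,(N-1,k,M)),(x',(N-1,k',M))) \<in> (RR N M n0 e ord)\<^sup>*"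
proof -
  obtain x0 where "(x0,(0,k',1)) \<in> E (split_map N M n0 e ord (x,(N-1,k,M)))"
    using st4[where ord=ord and k=k, OF N j] by blast
  then have "((x,(N-1,k,M)),(x0,(0,k',1))) \<in> RR N M n0 e ord" by (simp add: RR_def)
  then have "((x,(N-1,k,M)),(x0,(N-1,k',M))) \<in> (RR N M n0 e ord)\<^sup>*"
    using start_T[OF N M, of x0 k' n0 e ord] by (meson converse_rtrancl_into_rtrancl)
  then show ?thesis using letterT[OF N M, of x0 k' x' n0 e ord] by (rule rtrancl_trans)
qed

lemma pre_letter: "\<exists>w. sl w = x \<or> tl' w = x"
  by (cases x) (metis sl.simps tl'.simps)+

lemma main_conn: assumes N: "N\<ge>1" and M: "M\<ge>1"
  and ordk: "\<forall>k<m. set (ord k) = {j. j < m \<and> j \<noteq> k}"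
  shows "split_ergodic N m M n0 e ord"
proof (rule ergo_from_rtrancl, intro ballI)
  fix y z assume y: "y \<in> split_edges N m M" and z: "z \<in> split_edges N m M"
  obtain x i k j where yy: "y = (x,(i,k,j))" by (cases y) auto
  obtain x' i' k' j' where zz: "z = (x',(i',k',j'))" by (cases z) auto
  have km: "k < m" "k' < m" using y z yy zz unfolding split_edges_def star_edges_def by auto
  obtain w where w: "sl w = x' \<or> tl' w = x'" using pre_letter by blast
  have 1: "(y, (x,(N-1,k,M))) \<in> (RR N M n0 e ord)\<^sup>*" using to_T[OF N] y yy by simp
  have 2: "((x,(N-1,k,M)), (w,(N-1,k',M))) \<in> (RR N M n0 e ord)\<^sup>*"
  proof (cases "k = k'")
    case True then show ?thesis using letterT[OF N M] by simp
  next
    case False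
    then have "k' \<in> set (ord k)" using ordk km by auto
    then show ?thesis using crossT[OF N M] by simp
  qed
  have 3: "((w,(N-1,k',M)), (x',(0,k',1))) \<in> RR N M n0 e ord"
    using st3[OF N, of w k' M n0 e ord] w unfolding RR_def by auto
  have 4: "((x',(0,k',1)), z) \<in> (RR N M n0 e ord)\<^sup>*" using from_start[OF N] z zz by simp
  have "(y,z) \<in> (RR N M n0 e ord)\<^sup>*"
    using 1 2 3 4 by (meson converse_rtrancl_into_rtrancl rtrancl_trans)
  then show "(y, z) \<in> {(u, v). v \<in> E (split_map N M n0 e ord u)}\<^sup>*" by (simp add: RR_def)
qed


theorem mainTheorem9:
  fixes lam :: real and N m M n0 N' p :: nat
    and e :: "nat \<Rightarrow> nat \<Rightarrow> nat" and ord :: "nat \<Rightarrow> nat list" and s :: "nat \<Rightarrow> real"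
  assumes "weak_perron lam"
    and "N \<ge> 1"
    and "perron (lam ^ N)"
    and "m \<ge> 1"
    and "0 < n0" and "n0 < N'"
    and "alg_int (((lam ^ N) ^ N' - (lam ^ N) ^ n0) / 2)"
    and "M = p * (N' - n0) + N'"
    and "\<forall>k<m. in_Qfield (s k) (lam ^ N) \<and> alg_int (s k) \<and> s k \<noteq> 0"
    and "\<forall>k<m. (lam ^ N) ^ M * s k =
            (\<Sum>i<m. (2 * real (e k i) + 2) * s i) + 2 * (lam ^ N) * s k + (lam ^ N) ^ n0 * s k"
    and "\<forall>k<m. distinct (ord k) \<and> set (ord k) = {j. j < m \<and> j \<noteq> k}"
  shows "split_ergodic N m M n0 e ord"
proof (rule main_conn)
  show "N \<ge> 1" using assms(2) .
  show "M \<ge> 1" using assms(5,6,8) by simp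
  show "\<forall>k<m. set (ord k) = {j. j < m \<and> j \<noteq> k}" using assms(11) by blast
qed

end
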